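(* Let $\mathbb{F}$ be an algebraically closed field of characteristic zero, $n\geq1$, and $A\in{\rm GL}_n(\mathbb{F})$. Then there exists an invertible diagonal matrix $D\in{\rm D}_n(\mathbb{F})$ such that $AD$ has $n$ pairwise distinct eigenvalues.
   Context: ${\rm D}_n(\mathbb{F})$ denotes the group of invertible diagonal $n\times n$ matrices over $\mathbb{F}$. *)

theory Defs
  imports "Jordan_Normal_Form.Char_Poly" "HOL-Computational_Algebra.Polynomial"
begin

end

theory Submission imports Defs begin

lemma W_nonzero:
  fixes f g :: "'a::field_char_0 poly"
  assumes df: "degree f = Suc n" and dg: "degree g \<le> n" and g0: "g \<noteq> 0"
  shows "pderiv f * g - f * pderiv g \<noteq> 0"
proof -
  define m where "m = degree g"
  have "f \<noteq> 0" using df by auto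
  then have lf: "coeff f (Suc n) \<noteq> 0" using df leading_coeff_neq_0[of f] by simp
  have lg: "coeff g m \<noteq> 0" using g0 m_def by simp
  have dpf: "degree (pderiv f) = n" using df by (simp add: degree_pderiv)
  have c1: "coeff (pderiv f * g) (n + m) = of_nat (Suc n) * coeff f (Suc n) * coeff g m"
    using coeff_mult_degree_sum[of "pderiv f" g] dpf m_def by (simp add: coeff_pderiv)
  have c2: "coeff (f * pderiv g) (n + m) = of_nat m * coeff f (Suc n) * coeff g m"
  proof (cases "m = 0")
    case True
    then have "pderiv g = 0" using m_def
      by (simp add: pderiv_eq_0_iff)
    then show ?thesis using True by simp
  next
    case False
    have dpg: "degree (pderiv g) = m - 1" using m_def by (simp add: degree_pderiv)
    have "coeff (f * pderiv g) (Suc n + (m - 1)) = coeff f (Suc n) * coeff (pderiv g) (m - 1)"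
      using coeff_mult_degree_sum[of f "pderiv g"] dpg df by simp
    moreover have "Suc n + (m - 1) = n + m" using False by simp
    moreover have "coeff (pderiv g) (m - 1) = of_nat m * coeff g m"
      using False by (simp add: coeff_pderiv)
    ultimately show ?thesis by (simp add: algebra_simps)
  qed
  have "coeff (pderiv f * g - f * pderiv g) (n + m) = (of_nat (Suc n) - of_nat m) * coeff f (Suc n) * coeff g m"
    using c1 c2 by (simp add: algebra_simps)
  moreover have "(of_nat (Suc n) - of_nat m :: 'a) \<noteq> 0"
  proof
    assume "(of_nat (Suc n) - of_nat m :: 'a) = 0"
    then have "(of_nat (Suc n) :: 'a) = of_nat m" by simp
    then have "Suc n = m" by (simp only: of_nat_eq_iff)
    then show False using dg m_def by simp
  qed
  ultimately have "coeff (pderiv f * g - f * pderiv g) (n + m) \<noteq> 0" using lf lg by simp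
  then show ?thesis by auto
qed

lemma key_poly:
  fixes f g :: "'a::field_char_0 poly"
  assumes df: "degree f = Suc n" and dg: "degree g \<le> n"
    and sf: "\<forall>x. x \<noteq> 0 \<longrightarrow> poly f x = 0 \<longrightarrow> poly (pderiv f) x \<noteq> 0"
  shows "\<exists>s. s \<noteq> 0 \<and> (\<forall>x. x \<noteq> 0 \<longrightarrow> poly (f - Polynomial.smult s g) x = 0 \<longrightarrow> poly (pderiv (f - Polynomial.smult s g)) x \<noteq> 0)"
proof (cases "g = 0")
  case True
  then show ?thesis using sf by (intro exI[of _ 1]) simp
next
  case False
  define W where "W = pderiv f * g - f * pderiv g"
  have W0: "W \<noteq> 0" using W_nonzero[OF df dg False] W_def by simp
  have f0: "f \<noteq> 0" using df by auto
  define Bad where "Bad = {0} \<union> (\<lambda>x. poly f x / poly g x) ` {x. poly W x = 0}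
      \<union> (\<lambda>x. poly (pderiv f) x / poly (pderiv g) x) ` {x. poly f x = 0}"
  have "finite Bad" unfolding Bad_def using poly_roots_finite[OF W0] poly_roots_finite[OF f0] by simp
  then obtain s where s: "s \<notin> Bad" using ex_new_if_finite[OF infinite_UNIV_char_0] by blast
  show ?thesis
  proof (intro exI[of _ s] conjI allI impI)
    show "s \<noteq> 0" using s Bad_def by auto
    fix x :: 'a
    assume x0: "x \<noteq> 0" and r: "poly (f - Polynomial.smult s g) x = 0"
    show "poly (pderiv (f - Polynomial.smult s g)) x \<noteq> 0"
    proof
    assume d: "poly (pderiv (f - Polynomial.smult s g)) x = 0"
    have r': "poly f x = s * poly g x" using r by simp
    have d': "poly (pderiv f) x = s * poly (pderiv g) x" using d by (simp add: pderiv_diff Polynomial.pderiv_smult)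
    show False
    proof (cases "poly g x = 0")
      case True
      then have fx: "poly f x = 0" using r' by simp
      then have "poly (pderiv f) x \<noteq> 0" using sf x0 by auto
      then have "poly (pderiv g) x \<noteq> 0" using d' by auto
      then have ss: "s = poly (pderiv f) x / poly (pderiv g) x" using d' by simp
      have "s \<in> (\<lambda>x. poly (pderiv f) x / poly (pderiv g) x) ` {x. poly f x = 0}"
        by (rule image_eqI[of _ _ x]) (use ss fx in auto)
      then have "s \<in> Bad" unfolding Bad_def by blast
      then show False using s by simp
    next
      case False
      then have ss: "s = poly f x / poly g x" using r' by simp
      have "poly W x = 0" unfolding W_def using r' d' by (simp add: algebra_simps)
      then have "s \<in> (\<lambda>x. poly f x / poly g x) ` {x. poly W x = 0}"
        by (intro image_eqI[of _ _ x]) (use ss in auto)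
      then have "s \<in> Bad" unfolding Bad_def by blast
      then show False using s by simp
    qed
    qed
  qed
qed


lemma smult_sum_right: "Polynomial.smult a (sum f S) = (\<Sum>i\<in>S. Polynomial.smult a (f i))"
  by (induct S rule: infinite_finite_induct) (auto simp: smult_add_right)

lemma affine_col:
  fixes A :: "'a::field mat"
  assumes j: "j < n"
  shows "\<exists>g. \<forall>s. char_poly (mat n n (\<lambda>(i,k). A$$(i,k) * (if k = j then s else d k)))
     = char_poly (mat n n (\<lambda>(i,k). A$$(i,k) * (if k = j then 0 else d k))) - Polynomial.smult s g"
proof -
  define M where "M s = mat n n (\<lambda>(i,k). A$$(i,k) * (if k = j then s else d k))" for s
  define C where "C s = char_poly_matrix (M s)" for s
  have Cc: "C s \<in> carrier_mat n n" for s unfolding C_def M_def by simp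
  have Cent: "C s $$ (i,k) = (if i = k then [:0,1:] else 0) + [:- (A$$(i,k) * (if k = j then s else d k)):]"
    if "i < n" "k < n" for s i k
    using that unfolding C_def M_def char_poly_matrix_def by simp
  have cof: "cofactor (C s) i j = cofactor (C 0) i j" if i: "i < n" for s i
    unfolding cofactor_def
  proof (rule arg_cong[where f = "\<lambda>x. _ * det x"])
    show "mat_delete (C s) i j = mat_delete (C 0) i j"
    proof (rule eq_matI)
      fix a b assume a: "a < dim_row (mat_delete (C 0) i j)" and b: "b < dim_col (mat_delete (C 0) i j)"
      have a': "a < n - 1" and b': "b < n - 1" using a b Cc[of 0] by auto
      define a2 where "a2 = (if a < i then a else Suc a)"
      define b2 where "b2 = (if b < j then b else Suc b)"
      have "a2 < n" "b2 < n" "b2 \<noteq> j" using a' b' unfolding a2_def b2_def by auto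
      then show "mat_delete (C s) i j $$ (a, b) = mat_delete (C 0) i j $$ (a, b)"
        using a' b' Cc[of s] Cc[of 0] Cent[of a2 b2 s] Cent[of a2 b2 0]
        unfolding mat_delete_def a2_def b2_def by simp
    qed (use Cc[of s] Cc[of 0] in auto)
  qed
  define g where "g = (\<Sum>i<n. Polynomial.smult (A$$(i,j)) (cofactor (C 0) i j))"
  have "char_poly (M s) = char_poly (M 0) - Polynomial.smult s g" for s
  proof -
    have "char_poly (M s) = (\<Sum>i<n. C s $$ (i,j) * cofactor (C s) i j)"
      unfolding char_poly_def C_def[symmetric] using laplace_expansion_column[OF Cc j] .
    also have "\<dots> = (\<Sum>i<n. C 0 $$ (i,j) * cofactor (C 0) i j - Polynomial.smult s (Polynomial.smult (A$$(i,j)) (cofactor (C 0) i j)))"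
    proof (rule sum.cong[OF refl])
      fix i assume "i \<in> {..<n}"
      then have i: "i < n" by simp
      have "C s $$ (i,j) = C 0 $$ (i,j) - [:A$$(i,j) * s:]" using Cent[OF i j, of s] Cent[OF i j, of 0] by simp
      show "C s $$ (i,j) * cofactor (C s) i j = C 0 $$ (i,j) * cofactor (C 0) i j - Polynomial.smult s (Polynomial.smult (A$$(i,j)) (cofactor (C 0) i j))"
      proof -
        have e2: "[:A$$(i,j) * s:] * cofactor (C 0) i j = Polynomial.smult s (Polynomial.smult (A$$(i,j)) (cofactor (C 0) i j))"
          by (simp add: mult.commute)
        show ?thesis unfolding cof[OF i, of s] \<open>C s $$ (i,j) = _\<close> e2[symmetric] by (simp add: left_diff_distrib)
      qed
    qed
    also have "\<dots> = (\<Sum>i<n. C 0 $$ (i,j) * cofactor (C 0) i j) - Polynomial.smult s g"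
      unfolding g_def smult_sum_right sum_subtractf ..
    also have "(\<Sum>i<n. C 0 $$ (i,j) * cofactor (C 0) i j) = char_poly (M 0)"
      unfolding char_poly_def C_def[symmetric] using laplace_expansion_column[OF Cc j] by simp
    finally show ?thesis .
  qed
  then show ?thesis unfolding M_def by blast
qed


definition dmat :: "nat \<Rightarrow> (nat \<Rightarrow> 'a::zero) \<Rightarrow> 'a mat" where
  "dmat n d = mat n n (\<lambda>(i,j). if i = j then d i else 0)"

lemma dmat_carrier[simp]: "dmat n d \<in> carrier_mat n n"
  unfolding dmat_def by simp

lemma dmat_dim[simp]: "dim_row (dmat n d) = n" "dim_col (dmat n d) = n"
  unfolding dmat_def by simp_all

lemma mult_dmat:
  fixes A :: "'a::comm_ring_1 mat"
  assumes A: "A \<in> carrier_mat n n"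
  shows "A * dmat n d = mat n n (\<lambda>(i,j). A$$(i,j) * d j)"
proof (rule eq_matI)
  fix i j assume i: "i < dim_row (mat n n (\<lambda>(i,j). A$$(i,j) * d j))" and j: "j < dim_col (mat n n (\<lambda>(i,j). A$$(i,j) * d j))"
  then have i: "i < n" and j: "j < n" by auto
  have "(A * dmat n d) $$ (i,j) = (\<Sum>k\<in>{0..<n}. A$$(i,k) * (if k = j then d k else 0))"
    using A i j unfolding dmat_def by (simp add: scalar_prod_def)
  also have "\<dots> = A$$(i,j) * d j"
    by (subst sum.cong[OF refl, of _ _ "\<lambda>k. if k = j then A$$(i,k) * d k else 0"]) (auto simp: j)
  finally show "(A * dmat n d) $$ (i,j) = mat n n (\<lambda>(i,j). A$$(i,j) * d j) $$ (i,j)" using i j by simp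
qed (use A in auto)

lemma char_poly_0x0:
  fixes B :: "'a::field mat"
  assumes "B \<in> carrier_mat 0 0"
  shows "char_poly B = 1"
proof -
  have "degree (char_poly B) = 0 \<and> coeff (char_poly B) 0 = 1" using degree_monic_char_poly[OF assms] .
  then show ?thesis using degree_0_id[of "char_poly B"] by (simp add: one_pCons)
qed

lemma main_induct:
  fixes A :: "'a::field_char_0 mat"
  assumes "A \<in> carrier_mat n n"
  shows "\<exists>d. (\<forall>i<n. d i \<noteq> 0) \<and> (\<forall>x. x \<noteq> 0 \<longrightarrow> poly (char_poly (A * dmat n d)) x = 0
            \<longrightarrow> poly (pderiv (char_poly (A * dmat n d))) x \<noteq> 0)"
  using assms
proof (induction n arbitrary: A)
  case 0
  have "char_poly (A * dmat 0 (\<lambda>_. 1)) = 1"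
    by (rule char_poly_0x0) (use 0 in auto)
  then show ?case by (intro exI[of _ "\<lambda>_. 1"] conjI allI impI) auto
next
  case (Suc n)
  have A: "A \<in> carrier_mat (Suc n) (Suc n)" by fact
  define A' where "A' = mat_delete A n n"
  have A': "A' \<in> carrier_mat n n" unfolding A'_def using mat_delete_carrier[OF A, of n n] by simp
  obtain d' where d'0: "\<forall>i<n. d' i \<noteq> 0" and d'good: "\<forall>x. x \<noteq> 0 \<longrightarrow> poly (char_poly (A' * dmat n d')) x = 0
            \<longrightarrow> poly (pderiv (char_poly (A' * dmat n d'))) x \<noteq> 0"
    using Suc.IH[OF A'] by blast
  define M where "M s = mat (Suc n) (Suc n) (\<lambda>(i,k). A$$(i,k) * (if k = n then s else d' k))" for s
  have Mc: "M s \<in> carrier_mat (Suc n) (Suc n)" for s unfolding M_def by simp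
  have Meq: "A * dmat (Suc n) (d'(n := s)) = M s" for s
    unfolding mult_dmat[OF A] M_def by (rule cong_mat) auto
  obtain g where g: "\<And>s. char_poly (M s) = char_poly (M 0) - Polynomial.smult s g"
    using affine_col[of n "Suc n" A d'] unfolding M_def by auto
  define c where "c = char_poly (A' * dmat n d')"
  define f where "f = char_poly (M 0)"
  have "mat_delete (M 0) n n = A' * dmat n d'"
    unfolding mult_dmat[OF A'] unfolding M_def A'_def
    by (rule eq_matI) (use A in \<open>auto simp: mat_delete_def\<close>)
  then have fc: "f = monom 1 1 * c" unfolding f_def c_def
    using char_poly_0_column[where i=n, OF _ Mc] unfolding M_def by auto
  have df: "degree f = Suc n" unfolding f_def using degree_monic_char_poly[OF Mc] by simp
  have sf: "\<forall>x. x \<noteq> 0 \<longrightarrow> poly f x = 0 \<longrightarrow> poly (pderiv f) x \<noteq> 0"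
  proof (intro allI impI)
    fix x :: 'a assume x0: "x \<noteq> 0" and fx: "poly f x = 0"
    then have cx: "poly c x = 0" unfolding fc by (simp add: poly_monom)
    have "pderiv f = monom 1 1 * pderiv c + c" unfolding fc
      by (simp add: pderiv_mult pderiv_monom)
    then have "poly (pderiv f) x = x * poly (pderiv c) x" using cx by (simp add: poly_monom)
    moreover have "poly (pderiv c) x \<noteq> 0" using d'good x0 cx unfolding c_def by blast
    ultimately show "poly (pderiv f) x \<noteq> 0" using x0 by simp
  qed
  have dg: "degree g \<le> n"
  proof (rule degree_le, intro allI impI)
    fix i assume i: "n < i"
    have g1: "g = f - char_poly (M 1)" using g[of 1] unfolding f_def by simp
    have m1: "degree (char_poly (M 1)) = Suc n \<and> coeff (char_poly (M 1)) (Suc n) = 1"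
      using degree_monic_char_poly[OF Mc] .
    have m0: "coeff f (Suc n) = 1" unfolding f_def using degree_monic_char_poly[OF Mc] by simp
    show "coeff g i = 0"
    proof (cases "i = Suc n")
      case True then show ?thesis using g1 m0 m1 by simp
    next
      case False
      then have "i > Suc n" using i by simp
      then show ?thesis using g1 df m1 by (simp add: coeff_eq_0)
    qed
  qed
  obtain s where s0: "s \<noteq> 0" and sgood: "\<forall>x. x \<noteq> 0 \<longrightarrow> poly (f - Polynomial.smult s g) x = 0 \<longrightarrow> poly (pderiv (f - Polynomial.smult s g)) x \<noteq> 0"
    using key_poly[OF df dg sf] by blast
  have cp: "char_poly (A * dmat (Suc n) (d'(n := s))) = f - Polynomial.smult s g"
    unfolding Meq f_def by (rule g)
  show ?case
  proof (intro exI[of _ "d'(n := s)"] conjI)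
    show "\<forall>i<Suc n. (d'(n := s)) i \<noteq> 0" using s0 d'0 by auto
    show "\<forall>x. x \<noteq> 0 \<longrightarrow> poly (char_poly (A * dmat (Suc n) (d'(n := s)))) x = 0
            \<longrightarrow> poly (pderiv (char_poly (A * dmat (Suc n) (d'(n := s))))) x \<noteq> 0"
      unfolding cp using sgood by blast
  qed
qed


lemma card_set_mset_le1:
  assumes "\<forall>x. count M x \<le> 1"
  shows "card (set_mset M) = size M"
  using assms
proof (induction M)
  case empty then show ?case by simp
next
  case (add x M)
  have "\<forall>y. count M y \<le> 1"
  proof
    fix y show "count M y \<le> 1" using add.prems[rule_format, of y] by (simp split: if_splits)
  qed
  then have IH: "card (set_mset M) = size M" using add.IH by blast
  have "count M x = 0" using add.prems[rule_format, of x] by simp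
  then have "x \<notin> set_mset M" by (simp add: count_eq_zero_iff)
  then show ?case using IH by simp
qed

lemma card_roots_simple:
  fixes p :: "'a::{alg_closed_field, field_char_0} poly"
  assumes p0: "p \<noteq> 0" and lc: "lead_coeff p = 1"
    and simple: "\<forall>x. poly p x = 0 \<longrightarrow> poly (pderiv p) x \<noteq> 0"
  shows "card {x. poly p x = 0} = degree p"
proof -
  obtain M where sz: "size M = degree p" and pM: "p = Polynomial.smult (lead_coeff p) (\<Prod>x\<in>#M. [:-x, 1:])"
    using alg_closed_imp_factorization[OF p0] by blast
  have pM': "p = (\<Prod>x\<in>#M. [:-x, 1:])" using pM lc by simp
  have rsf: "rsquarefree p" using simple rsquarefree_roots by blast
  have roots: "{x. poly p x = 0} = set_mset M"
  proof -
    have "poly p y = 0 \<longleftrightarrow> y \<in># M" for y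
    proof -
      have "poly p y = prod_mset (image_mset (\<lambda>x. poly [:-x, 1:] y) M)"
        by (subst pM') (rule poly_prod_mset)
      then have "poly p y = 0 \<longleftrightarrow> 0 \<in># image_mset (\<lambda>x. poly [:-x, 1:] y) M"
        by (simp only: prod_mset_zero_iff)
      also have "\<dots> \<longleftrightarrow> (\<exists>x\<in>#M. y - x = 0)" by (simp add: image_iff)
      also have "\<dots> \<longleftrightarrow> y \<in># M" by simp
      finally show ?thesis .
    qed
    then show ?thesis by blast
  qed
  have cnt: "\<forall>x. count M x \<le> 1"
  proof (rule ccontr)
    assume "\<not> (\<forall>x. count M x \<le> 1)"
    then obtain x where "\<not> count M x \<le> 1" by blast
    then have cx: "count M x \<ge> 2" by simp
    then have "x \<in># M" by (intro count_inI) simp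
    then obtain M1 where M1: "M = add_mset x M1" by (blast dest: multi_member_split)
    have "count M1 x \<ge> 1" using cx M1 by simp
    then have "x \<in># M1" by (intro count_inI) simp
    then obtain M2 where M2: "M1 = add_mset x M2" by (blast dest: multi_member_split)
    have "p = [:-x, 1:] ^ 2 * (\<Prod>x\<in>#M2. [:-x, 1:])"
      unfolding pM' M1 M2 image_mset_add_mset prod_mset.add_mset by (simp only: power2_eq_square mult.assoc)
    moreover have "[:-x, 1:] ^ 2 dvd [:-x, 1:] ^ 2 * (\<Prod>x\<in>#M2. [:-x, 1:])" by (rule dvd_triv_left)
    ultimately have "[:-x, 1:] ^ 2 dvd p" by simp
    then have "2 \<le> order x p" using p0 order_divides by blast
    moreover have "order x p \<le> 1" using rsf unfolding rsquarefree_def by (metis le_Suc_eq le_zero_eq order_refl One_nat_def)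
    ultimately show False by simp
  qed
  show ?thesis using roots card_set_mset_le1[OF cnt] sz by simp
qed

lemma invertible_det_nonzero:
  fixes A :: "'a::field mat"
  assumes A: "A \<in> carrier_mat n n" and inv: "invertible_mat A"
  shows "det A \<noteq> 0"
proof -
  obtain B where AB: "A * B = 1\<^sub>m n" and BA: "B * A = 1\<^sub>m (dim_row B)"
    using inv A unfolding invertible_mat_def inverts_mat_def by auto
  have "dim_col B = n" using arg_cong[OF AB, of dim_col] by simp
  moreover have "dim_row B = n" using arg_cong[OF BA, of dim_col] A by simp
  ultimately have B: "B \<in> carrier_mat n n" by auto
  have "det A * det B = 1" using det_mult[OF A B] AB by simp
  then show ?thesis by auto
qed

lemma det_nonzero_invertible:
  fixes A :: "'a::field mat"
  assumes A: "A \<in> carrier_mat n n" and d: "det A \<noteq> 0"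
  shows "invertible_mat A"
proof -
  have "A \<in> Units (ring_mat TYPE('a) n undefined)" by (rule det_non_zero_imp_unit[OF A d])
  then obtain B where B: "B \<in> carrier_mat n n" and "B * A = 1\<^sub>m n" "A * B = 1\<^sub>m n"
    unfolding Units_def ring_mat_simps by auto
  then show ?thesis using A unfolding invertible_mat_def inverts_mat_def square_mat.simps by auto
qed

theorem proposition9:
  fixes A :: "'a :: {alg_closed_field, field_char_0} mat" and n :: nat
  assumes "n \<ge> 1"
    and "A \<in> carrier_mat n n"
    and "invertible_mat A"
  shows "\<exists>D \<in> carrier_mat n n. diagonal_mat D \<and> invertible_mat D \<and>
           card {e. eigenvalue (A * D) e} = n"
proof -
  have A: "A \<in> carrier_mat n n" by fact
  obtain d where d0: "\<forall>i<n. d i \<noteq> 0" and good: "\<forall>x. x \<noteq> 0 \<longrightarrow> poly (char_poly (A * dmat n d)) x = 0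
            \<longrightarrow> poly (pderiv (char_poly (A * dmat n d))) x \<noteq> 0"
    using main_induct[OF A] by blast
  define D where "D = dmat n d"
  have Dc: "D \<in> carrier_mat n n" unfolding D_def by simp
  have diag: "diagonal_mat D" unfolding diagonal_mat_def D_def dmat_def by simp
  have "upper_triangular D" unfolding upper_triangular_def D_def dmat_def by simp
  then have "det D = prod_list (diag_mat D)" by (rule det_upper_triangular[OF _ Dc])
  also have "\<dots> = (\<Prod>i = 0..<dim_row D. D $$ (i,i))" by (rule prod_list_diag_prod)
  also have "\<dots> = (\<Prod>i = 0..<n. D $$ (i,i))" using Dc by simp
  also have "\<dots> = (\<Prod>i = 0..<n. d i)" unfolding D_def dmat_def by (rule prod.cong) auto
  finally have dD: "det D \<noteq> 0" using d0 by simp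
  have invD: "invertible_mat D" by (rule det_nonzero_invertible[OF Dc dD])
  have AD: "A * D \<in> carrier_mat n n" using A Dc by simp
  have dAD: "det (A * D) \<noteq> 0"
    using det_mult[OF A Dc] invertible_det_nonzero[OF A assms(3)] dD by simp
  define p where "p = char_poly (A * D)"
  have eig: "eigenvalue (A * D) e \<longleftrightarrow> poly p e = 0" for e
    unfolding p_def by (rule eigenvalue_root_char_poly[OF AD])
  have "\<not> eigenvalue (A * D) 0"
  proof -
    have z: "0 \<cdot>\<^sub>m 1\<^sub>m n = (0\<^sub>m n n :: 'a mat)" by (rule eq_matI) auto
    have "dim_row A = n" using A by simp
    then have "A * D + 0 \<cdot>\<^sub>m 1\<^sub>m (dim_row (A * D)) = A * D" using AD unfolding index_mult_mat(2) by (simp only: z right_add_zero_mat)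
    then show ?thesis unfolding eigenvalue_det[OF AD] char_matrix_def using dAD by simp
  qed
  then have p00: "poly p 0 \<noteq> 0" using eig by blast
  have dp: "degree p = n \<and> coeff p n = 1" unfolding p_def by (rule degree_monic_char_poly[OF AD])
  then have p0: "p \<noteq> 0" by auto
  have simple: "\<forall>x. poly p x = 0 \<longrightarrow> poly (pderiv p) x \<noteq> 0"
  proof (intro allI impI)
    fix x assume px: "poly p x = 0"
    then have "x \<noteq> 0" using p00 by auto
    then show "poly (pderiv p) x \<noteq> 0" using good px unfolding p_def D_def by blast
  qed
  have "card {e. eigenvalue (A * D) e} = card {x. poly p x = 0}" using eig by simp
  also have "\<dots> = n" using card_roots_simple[OF p0 _ simple] dp by simp
  finally show ?thesis using Dc diag invD by blast
qed

end
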